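(* Let $f$ satisfy the $L$-descent condition for some $L>0$ and let $\{x^k\}$ be generated by Algorithm IRG with $\rho_k=\varepsilon_k$ for all $k$, where the stepsizes are either diminishing ($t_k>0$, $t_k\downarrow0$, $\sum_{k=1}^\infty t_k=\infty$) or of constant type (there exist $\delta\in(0,2)$ and $\delta'>0$ with $\delta'\le\frac{2-\delta}{L}$ and $t_k\in[\delta',\frac{2-\delta}{L}]$ for all $k$). Assume $\inf_k f(x^k)>-\infty$. Then: (i) $\varepsilon_k\downarrow0$ and $r_k\downarrow0$; (ii) every accumulation point of $\{x^k\}$ is a stationary point of $f$; (iii) if $\{x^k\}$ is bounded, its set of accumulation points is nonempty, compact and connected; (iv) if $\{x^k\}$ has an isolated accumulation point, then $\{x^k\}$ converges to it. Moreover, in the constant-type case, $\nabla f(x^k)\to0$ as $k\to\infty$.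
   Context: Algorithm IRG (general inexact reduced gradient framework). Let $f:\mathbb R^n\to\mathbb R$ be continuously differentiable. Parameters: initial point $x^1\in\mathbb R^n$, initial radii $\varepsilon_1>0$, $r_1>0$, reduction factors $\mu,\theta\in(0,1)$, and a sequence $\{\rho_k\}$ of positive numbers. For $k=1,2,\dots$: (1) choose $g^k\in\mathbb R^n$ with $\|g^k-\nabla f(x^k)\|\le\min\{\varepsilon_k,\rho_k\}$; (2) if $\|g^k\|\le r_k+\varepsilon_k$, set $r_{k+1}=\mu r_k$, $\varepsilon_{k+1}=\theta\varepsilon_k$, $d^k=0$; otherwise set $r_{k+1}=r_k$, $\varepsilon_{k+1}=\varepsilon_k$ and $d^k=-\frac{\|g^k\|-\varepsilon_k}{\|g^k\|}g^k$; (3) choose a stepsize $t_k>0$ by some rule; (4) set $x^{k+1}=x^k+t_kd^k$. $f$ satisfies the $L$-descent condition if $f(y)\le f(x)+\langle\nabla f(x),y-x\rangle+\frac L2\|y-x\|^2$ for all $x,y\in\mathbb R^n$. *)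

theory Defs
  imports "HOL-Analysis.Analysis"
begin

definition C1_with_gradient :: "('a::euclidean_space \<Rightarrow> real) \<Rightarrow> ('a \<Rightarrow> 'a) \<Rightarrow> bool" where
  "C1_with_gradient f df \<longleftrightarrow>
     (\<forall>x. (f has_derivative (\<lambda>h. df x \<bullet> h)) (at x)) \<and> continuous_on UNIV df"

definition L_descent :: "('a::euclidean_space \<Rightarrow> real) \<Rightarrow> ('a \<Rightarrow> 'a) \<Rightarrow> real \<Rightarrow> bool" where
  "L_descent f df L \<longleftrightarrow>
     (\<forall>x y. f y \<le> f x + df x \<bullet> (y - x) + L / 2 * (norm (y - x))\<^sup>2)"

text \<open>Algorithm IRG (indices start at 0 instead of 1), with inexactness sequence rho.\<close>
definition IRG ::
  "('a::euclidean_space \<Rightarrow> 'a) \<Rightarrow> real \<Rightarrow> real \<Rightarrow> (nat \<Rightarrow> real) \<Rightarrow>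
   (nat \<Rightarrow> 'a) \<Rightarrow> (nat \<Rightarrow> 'a) \<Rightarrow> (nat \<Rightarrow> real) \<Rightarrow> (nat \<Rightarrow> real) \<Rightarrow>
   (nat \<Rightarrow> 'a) \<Rightarrow> (nat \<Rightarrow> real) \<Rightarrow> bool" where
  "IRG df \<mu> \<theta> \<rho> x g eps r d t \<longleftrightarrow>
     eps 0 > 0 \<and> r 0 > 0 \<and> 0 < \<mu> \<and> \<mu> < 1 \<and> 0 < \<theta> \<and> \<theta> < 1 \<and> (\<forall>k. \<rho> k > 0) \<and>
     (\<forall>k. norm (g k - df (x k)) \<le> min (eps k) (\<rho> k)) \<and>
     (\<forall>k. if norm (g k) \<le> r k + eps k
           then r (Suc k) = \<mu> * r k \<and> eps (Suc k) = \<theta> * eps k \<and> d k = 0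
           else r (Suc k) = r k \<and> eps (Suc k) = eps k \<and>
                d k = - ((norm (g k) - eps k) / norm (g k)) *\<^sub>R g k) \<and>
     (\<forall>k. t k > 0) \<and>
     (\<forall>k. x (Suc k) = x k + t k *\<^sub>R d k)"

definition diminishing_steps :: "(nat \<Rightarrow> real) \<Rightarrow> bool" where
  "diminishing_steps t \<longleftrightarrow> (\<forall>k. t k > 0) \<and> decseq t \<and> t \<longlonglongrightarrow> 0 \<and>
     filterlim (\<lambda>n. \<Sum>k<n. t k) at_top sequentially"

definition constant_type_steps :: "real \<Rightarrow> (nat \<Rightarrow> real) \<Rightarrow> bool" where
  "constant_type_steps L t \<longleftrightarrow> (\<exists>\<delta> \<delta>'. 0 < \<delta> \<and> \<delta> < 2 \<and> 0 < \<delta>' \<and> \<delta>' \<le> (2 - \<delta>) / L \<and>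
     (\<forall>k. \<delta>' \<le> t k \<and> t k \<le> (2 - \<delta>) / L))"

definition accumulation_points :: "(nat \<Rightarrow> 'a::metric_space) \<Rightarrow> 'a set" where
  "accumulation_points x = {a. \<exists>s. strict_mono s \<and> (x \<circ> s) \<longlonglongrightarrow> a}"

end

theory Submission
  imports Defs "HOL-Analysis.Analysis"
begin


lemma AP_iff:
  fixes x :: "nat \<Rightarrow> 'a::metric_space"
  shows "a \<in> accumulation_points x \<longleftrightarrow> (\<forall>e>0. \<forall>N. \<exists>n\<ge>N. dist (x n) a < e)"
proof
  assume "a \<in> accumulation_points x"
  then obtain s where s: "strict_mono s" "(x \<circ> s) \<longlonglongrightarrow> a" by (auto simp: accumulation_points_def)
  show "\<forall>e>0. \<forall>N. \<exists>n\<ge>N. dist (x n) a < e"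
  proof (intro allI impI)
    fix e :: real and N assume "e > 0"
    then obtain M where M: "\<forall>j\<ge>M. dist ((x \<circ> s) j) a < e" using s(2) unfolding lim_sequentially by blast
    then have "dist (x (s (max M N))) a < e" by auto
    moreover have "s (max M N) \<ge> N" using seq_suble[OF s(1), of "max M N"] by linarith
    ultimately show "\<exists>n\<ge>N. dist (x n) a < e" by blast
  qed
next
  assume H: "\<forall>e>0. \<forall>N. \<exists>n\<ge>N. dist (x n) a < e"
  define s where "s n i = (SOME j. i < j \<and> dist (x j) a < 1 / real (Suc n))" for n i
  have s: "i < s n i \<and> dist (x (s n i)) a < 1 / real (Suc n)" for n i
  proof -
    obtain j where "j \<ge> Suc i" "dist (x j) a < 1 / real (Suc n)"
      using H[rule_format, of "1 / real (Suc n)" "Suc i"] by auto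
    then have "\<exists>j. i < j \<and> dist (x j) a < 1 / real (Suc n)" by (intro exI[of _ j]) auto
    then show ?thesis unfolding s_def by (rule someI_ex)
  qed
  define r where "r = rec_nat (s 0 0) s"
  have rs: "r (Suc n) = s n (r n)" for n by (simp add: r_def)
  have "strict_mono r" by (auto simp: strict_mono_Suc_iff rs s)
  moreover have "(x \<circ> r) \<longlonglongrightarrow> a"
    unfolding lim_sequentially
  proof (intro allI impI)
    fix e :: real assume "e > 0"
    then obtain N0 where N0: "N0 > 0" "inverse (real N0) < e" using ex_inverse_of_nat_less by blast
    then obtain N where "N0 = Suc N" by (cases N0) auto
    with N0 have N: "inverse (real (Suc N)) < e" by simp
    have "dist ((x \<circ> r) n) a < e" if "n \<ge> Suc N" for n
    proof -
      obtain m where m: "n = Suc m" "m \<ge> N" using \<open>n \<ge> Suc N\<close> by (cases n) auto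
      have "dist ((x \<circ> r) n) a < 1 / real (Suc m)" using s[of "r m" m] by (simp add: m rs)
      also have "\<dots> \<le> 1 / real (Suc N)" using m by (simp add: frac_le)
      also have "\<dots> < e" using N by (simp add: inverse_eq_divide)
      finally show ?thesis .
    qed
    then show "\<exists>no. \<forall>n\<ge>no. dist ((x \<circ> r) n) a < e" by blast
  qed
  ultimately show "a \<in> accumulation_points x" by (auto simp: accumulation_points_def)
qed

lemma frequently_compact_AP:
  fixes x :: "nat \<Rightarrow> 'a::metric_space"
  assumes "compact K" "\<forall>N. \<exists>n\<ge>N. x n \<in> K"
  shows "\<exists>b\<in>K. b \<in> accumulation_points x"
proof -
  have "infinite {n. x n \<in> K}" using assms(2) by (simp add: infinite_nat_iff_unbounded_le)
  then obtain r :: "nat\<Rightarrow>nat" where r: "strict_mono r" "\<forall>n. r n \<in> {n. x n \<in> K}"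
    using infinite_enumerate by blast
  then have "\<forall>n. (x \<circ> r) n \<in> K" by auto
  then obtain l q where l: "l \<in> K" "strict_mono q" "((x \<circ> r) \<circ> q) \<longlonglongrightarrow> l"
    using seq_compactE[OF compact_imp_seq_compact[OF assms(1)]] by metis
  have "strict_mono (r \<circ> q)" using r(1) l(2) by (rule strict_mono_o)
  moreover have "(x \<circ> (r \<circ> q)) \<longlonglongrightarrow> l" using l(3) by (simp add: o_assoc)
  ultimately show ?thesis using l(1) by (auto simp: accumulation_points_def)
qed

lemma AP_closed:
  fixes x :: "nat \<Rightarrow> 'a::metric_space"
  shows "closed (accumulation_points x)"
  unfolding closure_subset_eq[symmetric]
proof
  fix z assume "z \<in> closure (accumulation_points x)"
  then have H: "\<forall>e>0. \<exists>y\<in>accumulation_points x. dist y z < e" unfolding closure_approachable by blast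
  show "z \<in> accumulation_points x"
    unfolding AP_iff
  proof (intro allI impI)
    fix e :: real and N assume "e > 0"
    then obtain y where y: "y \<in> accumulation_points x" "dist y z < e/2" using H by (meson half_gt_zero)
    then obtain n where "n \<ge> N" "dist (x n) y < e/2" using \<open>e>0\<close> unfolding AP_iff by (meson half_gt_zero)
    moreover have "dist (x n) z \<le> dist (x n) y + dist y z" by (rule dist_triangle)
    ultimately show "\<exists>n\<ge>N. dist (x n) z < e" using y by (intro exI[of _ n]) auto
  qed
qed

lemma AP_isolated:
  fixes x :: "nat \<Rightarrow> 'a::euclidean_space"
  assumes st: "(\<lambda>k. norm (x (Suc k) - x k)) \<longlonglongrightarrow> 0"
    and a: "a \<in> accumulation_points x" and e: "e > 0"
    and iso: "\<forall>b\<in>accumulation_points x. dist b a < e \<longrightarrow> b = a"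
  shows "x \<longlonglongrightarrow> a"
proof (rule ccontr)
  assume "\<not> x \<longlonglongrightarrow> a"
  then obtain e0 where e0: "e0 > 0" "\<forall>N. \<exists>n\<ge>N. \<not> dist (x n) a < e0"
    unfolding lim_sequentially by auto
  define \<epsilon> where "\<epsilon> = min e e0 / 3"
  have ep: "\<epsilon> > 0" "2*\<epsilon> < e" "2*\<epsilon> < e0" "\<epsilon> \<le> e0" using e e0 by (auto simp: \<epsilon>_def)
  obtain N0 where N0: "\<forall>n\<ge>N0. norm (x (Suc n) - x n) < \<epsilon>"
    using st ep(1) unfolding LIMSEQ_iff by auto
  define K where "K = cball a (2*\<epsilon>) - ball a \<epsilon>"
  have cK: "compact K" unfolding K_def by (intro compact_diff) auto
  have "\<exists>j\<ge>N. x j \<in> K" for N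
  proof -
    obtain n where n: "n \<ge> max N N0" "dist (x n) a < \<epsilon>" using a ep(1) unfolding AP_iff by blast
    obtain m where m: "m \<ge> n" "\<not> dist (x m) a < e0" using e0 by blast
    show ?thesis
    proof (rule ccontr)
      assume nK: "\<not> (\<exists>j\<ge>N. x j \<in> K)"
      have "dist (x j) a < \<epsilon>" if "n \<le> j" for j
        using that
      proof (induction rule: dec_induct)
        case base then show ?case using n by simp
      next
        case (step j)
        have "dist (x (Suc j)) a \<le> dist (x (Suc j)) (x j) + dist (x j) a" by (rule dist_triangle)
        moreover have "dist (x (Suc j)) (x j) < \<epsilon>" using N0 step(1) n(1) by (simp add: dist_norm)
        ultimately have "dist (x (Suc j)) a < 2*\<epsilon>" using step(3) by linarith
        moreover have "x (Suc j) \<notin> K" using nK step(1) n(1) by auto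
        ultimately show ?case unfolding K_def by (auto simp: dist_commute)
      qed
      then show False using m ep(4) by force
    qed
  qed
  then obtain b where b: "b \<in> K" "b \<in> accumulation_points x"
    using frequently_compact_AP[OF cK] by blast
  then have "dist b a < e" "b \<noteq> a" using ep unfolding K_def by (auto simp: dist_commute)
  then show False using iso b(2) by blast
qed


lemma conn_stay:
  fixes x :: "nat \<Rightarrow> 'a::metric_space"
  assumes cov: "\<forall>n\<ge>N. (\<exists>a\<in>A. dist (x n) a < \<delta>/3) \<or> (\<exists>b\<in>B. dist (x n) b < \<delta>/3)"
    and st: "\<forall>n\<ge>N. dist (x (Suc n)) (x n) < \<delta>/3"
    and sep: "\<forall>a\<in>A. \<forall>b\<in>B. \<delta> \<le> dist a b"
    and start: "\<exists>a\<in>A. dist (x N) a < \<delta>/3"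
  shows "\<forall>n\<ge>N. \<exists>a\<in>A. dist (x n) a < \<delta>/3"
proof (intro allI impI)
  fix n assume "N \<le> n"
  then show "\<exists>a\<in>A. dist (x n) a < \<delta>/3"
  proof (induction rule: dec_induct)
    case base then show ?case using start .
  next
    case (step n)
    then obtain a where a: "a \<in> A" "dist (x n) a < \<delta>/3" by blast
    show ?case
    proof (rule ccontr)
      assume "\<not> ?case"
      moreover have "N \<le> Suc n" using step(1) by simp
      ultimately have "\<exists>b\<in>B. dist (x (Suc n)) b < \<delta>/3" using cov[rule_format, OF \<open>N \<le> Suc n\<close>] by simp
      then obtain b where b: "b \<in> B" "dist (x (Suc n)) b < \<delta>/3" by blast
      have t1: "dist a b \<le> dist a (x n) + dist (x n) b" by (rule dist_triangle)
      have t2: "dist (x n) b \<le> dist (x n) (x (Suc n)) + dist (x (Suc n)) b" by (rule dist_triangle)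
      have "dist (x (Suc n)) (x n) < \<delta>/3" using st step(1) by simp
      then have "dist a b < \<delta>" using a b t1 t2 dist_commute[of a "x n"] dist_commute[of "x n" "x (Suc n)"] by linarith
      then show False using sep a b by force
    qed
  qed
qed

lemma conn_final:
  fixes x :: "nat \<Rightarrow> 'a::metric_space"
  assumes "\<forall>n\<ge>N. \<exists>a\<in>A. dist (x n) a < \<delta>/3" "b \<in> accumulation_points x"
    "\<forall>a\<in>A. \<delta> \<le> dist a b" "\<delta> > 0"
  shows False
proof -
  obtain n where n: "n \<ge> N" "dist (x n) b < \<delta>/3" using assms(2,4) unfolding AP_iff
    by (meson divide_pos_pos zero_less_numeral)
  then obtain a where a: "a \<in> A" "dist (x n) a < \<delta>/3" using assms(1) by blast
  have "dist a b \<le> dist a (x n) + dist (x n) b" by (rule dist_triangle)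
  then have "dist a b < \<delta>" using a n dist_commute[of a "x n"] assms(4) by linarith
  then show False using assms(3) a by force
qed

lemma AP_connected:
  fixes x :: "nat \<Rightarrow> 'a::euclidean_space"
  assumes bnd: "bounded (range x)" and st: "(\<lambda>k. norm (x (Suc k) - x k)) \<longlonglongrightarrow> 0"
    and cp: "compact (accumulation_points x)"
  shows "connected (accumulation_points x)"
proof (rule ccontr)
  let ?S = "accumulation_points x"
  assume "\<not> connected ?S"
  then obtain A B where AB: "closed A" "closed B" "A \<noteq> {}" "B \<noteq> {}" "A \<union> B = ?S" "A \<inter> B = {}"
    using connected_closed_set[OF AP_closed[of x]] by blast
  have cA: "compact A" using closed_Int_compact[OF AB(1) cp] AB(5) by (metis Int_absorb2 Un_upper1)
  obtain \<delta> where \<delta>: "\<delta> > 0" "\<forall>a\<in>A. \<forall>b\<in>B. \<delta> \<le> dist a b"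
    using separate_compact_closed[OF cA AB(2) AB(6)] by blast
  obtain R where R: "\<forall>n. norm (x n) \<le> R" using bnd unfolding bounded_iff by auto
  define U where "U = (\<Union>a\<in>A \<union> B. ball a (\<delta>/3))"
  have oU: "open U" unfolding U_def by auto
  define K where "K = cball 0 R - U"
  have cK: "compact K" unfolding K_def using oU by (intro compact_diff) auto
  have "\<exists>N1. \<forall>n\<ge>N1. x n \<in> U"
  proof (rule ccontr)
    assume "\<not> ?thesis"
    then have "\<forall>N. \<exists>n\<ge>N. x n \<in> K" using R unfolding K_def by (auto simp: dist_norm)
    then obtain b where b: "b \<in> K" "b \<in> ?S" using frequently_compact_AP[OF cK] by blast
    have "b \<in> A \<union> B" using AB(5) b(2) by simp
    moreover have "b \<in> ball b (\<delta>/3)" using \<delta>(1) by simp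
    ultimately have "b \<in> U" unfolding U_def by (rule UN_I)
    then show False using b(1) unfolding K_def by auto
  qed
  then obtain N1 where N1: "\<forall>n\<ge>N1. x n \<in> U" by blast
  have "\<delta>/3 > 0" using \<delta>(1) by simp
  from st[unfolded LIMSEQ_iff, rule_format, OF this]
  obtain N2 where N2': "\<forall>n\<ge>N2. norm (norm (x (Suc n) - x n) - 0) < \<delta>/3" by blast
  have N2: "\<forall>n\<ge>N2. norm (x (Suc n) - x n) < \<delta>/3"
  proof (intro allI impI)
    fix n assume "N2 \<le> n" then show "norm (x (Suc n) - x n) < \<delta>/3" using N2'[rule_format, of n] by simp
  qed
  define N where "N = max N1 N2"
  have cov: "\<forall>n\<ge>N. (\<exists>a\<in>A. dist (x n) a < \<delta>/3) \<or> (\<exists>b\<in>B. dist (x n) b < \<delta>/3)"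
  proof (intro allI impI)
    fix n assume "N \<le> n"
    then have "x n \<in> U" using N1 by (simp add: N_def)
    then obtain c where c: "c \<in> A \<union> B" "dist c (x n) < \<delta>/3" unfolding U_def by auto
    then have "dist (x n) c < \<delta>/3" by (simp add: dist_commute)
    then show "(\<exists>a\<in>A. dist (x n) a < \<delta>/3) \<or> (\<exists>b\<in>B. dist (x n) b < \<delta>/3)" using c(1) by blast
  qed
  have stN: "\<forall>n\<ge>N. dist (x (Suc n)) (x n) < \<delta>/3" using N2 unfolding N_def by (simp add: dist_norm)
  have sepBA: "\<forall>b\<in>B. \<forall>a\<in>A. \<delta> \<le> dist b a" using \<delta>(2) by (metis dist_commute)
  obtain a0 where a0: "a0 \<in> A" using AB(3) by blast
  obtain b0 where b0: "b0 \<in> B" using AB(4) by blast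
  have a0S: "a0 \<in> ?S" "b0 \<in> ?S" using AB(5) a0 b0 by auto
  show False
  proof (cases "\<exists>a\<in>A. dist (x N) a < \<delta>/3")
    case True
    from conn_stay[OF cov stN \<delta>(2) True] have "\<forall>n\<ge>N. \<exists>a\<in>A. dist (x n) a < \<delta>/3" .
    moreover have "\<forall>a\<in>A. \<delta> \<le> dist a b0" using \<delta>(2) b0 by blast
    ultimately show False using conn_final a0S(2) \<delta>(1) by blast
  next
    case False
    then have T: "\<exists>b\<in>B. dist (x N) b < \<delta>/3" using cov by blast
    have cov': "\<forall>n\<ge>N. (\<exists>b\<in>B. dist (x n) b < \<delta>/3) \<or> (\<exists>a\<in>A. dist (x n) a < \<delta>/3)" using cov by blast
    from conn_stay[OF cov' stN sepBA T] have "\<forall>n\<ge>N. \<exists>b\<in>B. dist (x n) b < \<delta>/3" .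
    moreover have "\<forall>b\<in>B. \<delta> \<le> dist b a0" using sepBA a0 by blast
    ultimately show False using conn_final a0S(1) \<delta>(1) by blast
  qed
qed



lemma nonnull_step:
  fixes G gr D :: "'a::euclidean_space" and e rr :: real
  assumes err: "norm (G - gr) \<le> e" and e: "e > 0" and rr: "rr > 0"
    and nn: "\<not> norm G \<le> rr + e"
    and D: "D = - ((norm G - e) / norm G) *\<^sub>R G"
  shows "gr \<bullet> D \<le> - ((norm D)^2)" "norm D = norm G - e"
proof -
  have nG: "norm G > e" "norm G > 0" using nn rr e by auto
  define s where "s = (norm G - e) / norm G"
  have s: "s > 0" using nG by (simp add: s_def)
  have Ds: "D = - s *\<^sub>R G" using D by (simp add: s_def)
  have sG: "s * norm G = norm G - e" using nG by (simp add: s_def)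
  show nD: "norm D = norm G - e" using s sG by (simp add: Ds)
  have cs: "(G - gr) \<bullet> G \<le> e * norm G"
    using norm_cauchy_schwarz[of "G - gr" G] err mult_right_mono[OF err norm_ge_zero[of G]] by linarith
  have "gr \<bullet> G = G \<bullet> G - (G - gr) \<bullet> G" by (simp add: inner_diff_left)
  also have "G \<bullet> G = (norm G)^2" by (simp add: power2_norm_eq_inner)
  finally have gG: "gr \<bullet> G \<ge> (norm G)^2 - e * norm G" using cs by linarith
  have "gr \<bullet> D = - s * (gr \<bullet> G)" by (simp add: Ds)
  also have "\<dots> \<le> - s * ((norm G)^2 - e * norm G)" using gG s by (simp add: mult_left_mono)
  also have "\<dots> = - (s * norm G) * (norm G - e)" by (simp add: algebra_simps power2_eq_square)
  also have "\<dots> = - ((norm G - e) * (norm G - e))" by (simp only: sG)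
  also have "\<dots> = - ((norm D)^2)" by (simp add: nD power2_eq_square)
  finally show "gr \<bullet> D \<le> - ((norm D)^2)" .
qed

lemma no_infinite_descent:
  fixes F t :: "nat \<Rightarrow> real"
  assumes dec: "\<forall>k\<ge>N. \<gamma> * t k \<le> F k - F (Suc k)" and g: "\<gamma> > 0" and m: "\<forall>k. m \<le> F k"
    and P2: "\<forall>i M. \<exists>j\<ge>i. M \<le> (\<Sum>k\<in>{i..<j}. t k)"
  shows False
proof -
  have tel: "\<gamma> * (\<Sum>k\<in>{N..<j}. t k) \<le> F N - F j" if "N \<le> j" for j
    using that
  proof (induction rule: dec_induct)
    case base then show ?case by simp
  next
    case (step n)
    have "\<gamma> * (\<Sum>k\<in>{N..<Suc n}. t k) = \<gamma> * (\<Sum>k\<in>{N..<n}. t k) + \<gamma> * t n"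
      using step(1) by (simp add: sum.atLeastLessThan_Suc algebra_simps)
    then show ?case using step(3) dec step(1) by fastforce
  qed
  obtain j where j: "j \<ge> N" "(F N - m) / \<gamma> + 1 \<le> (\<Sum>k\<in>{N..<j}. t k)" using P2 by blast
  have "\<gamma> * ((F N - m) / \<gamma> + 1) \<le> \<gamma> * (\<Sum>k\<in>{N..<j}. t k)" using j(2) g by (simp add: mult_left_mono)
  moreover have "\<gamma> * ((F N - m) / \<gamma> + 1) = F N - m + \<gamma>" using g by (simp add: field_simps)
  ultimately have "F N - m + \<gamma> \<le> F N - F j" using tel[OF j(1)] by linarith
  then show False using m[rule_format, of j] g by linarith
qed

lemma dec_to_zero:
  fixes e :: "nat \<Rightarrow> real"
  assumes pos: "\<forall>k. e k > 0" and dec: "\<forall>k. e (Suc k) \<le> e k" and q: "0 < q" "q < 1"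
    and inf: "\<forall>N. \<exists>k\<ge>N. e (Suc k) = q * e k"
  shows "e \<longlonglongrightarrow> 0"
proof -
  have "decseq e" using dec by (simp add: decseq_Suc_iff)
  moreover have "\<forall>i. 0 \<le> e i" using pos by (simp add: less_imp_le)
  ultimately obtain l where l: "e \<longlonglongrightarrow> l" "\<forall>i. l \<le> e i" by (rule decseq_convergent)
  have l0: "l \<ge> 0" using l(1) pos by (meson LIMSEQ_le_const less_imp_le)
  have "l = 0"
  proof (rule ccontr)
    assume "l \<noteq> 0" then have lp: "l > 0" using l0 by simp
    have "(\<lambda>k. e (Suc k) - e k) \<longlonglongrightarrow> l - l" using l(1) by (intro tendsto_diff LIMSEQ_Suc)
    then have "(\<lambda>k. e (Suc k) - e k) \<longlonglongrightarrow> 0" by simp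
    moreover have "(1 - q) * l > 0" using lp q by simp
    ultimately obtain N where N: "\<forall>k\<ge>N. norm (e (Suc k) - e k - 0) < (1 - q) * l"
      unfolding LIMSEQ_iff by blast
    obtain k where k: "k \<ge> N" "e (Suc k) = q * e k" using inf by blast
    have "(1 - q) * l \<le> (1 - q) * e k" using l(2) q by (simp add: mult_left_mono)
    moreover have "norm (e (Suc k) - e k - 0) = (1 - q) * e k" using k(2) q pos
      by (simp add: algebra_simps abs_if)
    ultimately show False using N k(1) by fastforce
  qed
  then show ?thesis using l(1) by simp
qed

lemma lim0_ev_less:
  fixes u :: "nat \<Rightarrow> real"
  assumes "u \<longlonglongrightarrow> 0" "e > 0"
  shows "\<exists>N. \<forall>k\<ge>N. u k < e"
proof -
  obtain N where N: "\<forall>k\<ge>N. norm (u k - 0) < e" using assms unfolding LIMSEQ_iff by blast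
  have "u k < e" if "k \<ge> N" for k
  proof -
    have "norm (u k - 0) = \<bar>u k\<bar>" by simp
    then show ?thesis using N that abs_ge_self[of "u k"] by fastforce
  qed
  then show ?thesis by blast
qed



theorem mainTheorem11:
  fixes f :: "'a::euclidean_space \<Rightarrow> real" and df :: "'a \<Rightarrow> 'a"
    and x g d :: "nat \<Rightarrow> 'a" and eps r t :: "nat \<Rightarrow> real"
    and L \<mu> \<theta> :: real
  assumes "C1_with_gradient f df"
    and "L > 0" and "L_descent f df L"
    and "IRG df \<mu> \<theta> eps x g eps r d t"
    and "diminishing_steps t \<or> constant_type_steps L t"
    and "bdd_below (range (\<lambda>k. f (x k)))"
  shows "(decseq eps \<and> eps \<longlonglongrightarrow> 0 \<and> decseq r \<and> r \<longlonglongrightarrow> 0)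
    \<and> (\<forall>a \<in> accumulation_points x. df a = 0)
    \<and> (bounded (range x) \<longrightarrow>
         accumulation_points x \<noteq> {} \<and> compact (accumulation_points x)
         \<and> connected (accumulation_points x))
    \<and> (\<forall>a \<in> accumulation_points x.
         (\<exists>e>0. \<forall>b \<in> accumulation_points x. dist b a < e \<longrightarrow> b = a) \<longrightarrow> x \<longlonglongrightarrow> a)
    \<and> (constant_type_steps L t \<longrightarrow> (\<lambda>k. df (x k)) \<longlonglongrightarrow> 0)"
proof -
  note irg = assms(4)[unfolded IRG_def]
  have r0: "r 0 > 0" and mu: "0 < \<mu>" "\<mu> < 1" and th: "0 < \<theta>" "\<theta> < 1"
    and epspos: "\<forall>k. eps k > 0" and gerr: "\<forall>k. norm (g k - df (x k)) \<le> eps k"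
    and stp: "\<forall>k. if norm (g k) \<le> r k + eps k
           then r (Suc k) = \<mu> * r k \<and> eps (Suc k) = \<theta> * eps k \<and> d k = 0
           else r (Suc k) = r k \<and> eps (Suc k) = eps k \<and>
                d k = - ((norm (g k) - eps k) / norm (g k)) *\<^sub>R g k"
    and tpos: "\<forall>k. t k > 0" and xs: "\<forall>k. x (Suc k) = x k + t k *\<^sub>R d k"
    using irg by auto
  have L: "L > 0" using assms(2) .
  have rpos: "r k > 0" for k
  proof (induction k)
    case 0 then show ?case using r0 .
  next
    case (Suc k) then show ?case using stp[rule_format, of k] mu by (auto split: if_splits)
  qed
  define F where "F k = f (x k)" for k
  have nul: "r (Suc k) = \<mu> * r k \<and> eps (Suc k) = \<theta> * eps k \<and> d k = 0"
    if "norm (g k) \<le> r k + eps k" for k using stp[rule_format, of k] that by simp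
  have nn: "r (Suc k) = r k \<and> eps (Suc k) = eps k \<and> d k = - ((norm (g k) - eps k) / norm (g k)) *\<^sub>R g k"
    if "\<not> norm (g k) \<le> r k + eps k" for k using stp[rule_format, of k] that by simp
  have nnstep: "df (x k) \<bullet> d k \<le> - ((norm (d k))^2) \<and> norm (d k) = norm (g k) - eps k"
    if "\<not> norm (g k) \<le> r k + eps k" for k
    using nonnull_step[OF gerr[rule_format, of k] epspos[rule_format, of k] rpos[of k] that] nn[OF that]
    by blast
  have stepn: "norm (x (Suc k) - x k) = t k * norm (d k)" for k
    using xs tpos[rule_format, of k] by simp
  have desc: "F (Suc k) \<le> F k - t k * (1 - L * t k / 2) * (norm (d k))^2" for k
  proof (cases "norm (g k) \<le> r k + eps k")
    case True
    then show ?thesis using nul[OF True] xs by (simp add: F_def)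
  next
    case False
    have ld: "f (x (Suc k)) \<le> f (x k) + df (x k) \<bullet> (x (Suc k) - x k) + L / 2 * (norm (x (Suc k) - x k))\<^sup>2"
      using assms(3) unfolding L_descent_def by blast
    have i1: "df (x k) \<bullet> (x (Suc k) - x k) = t k * (df (x k) \<bullet> d k)" using xs by simp
    have i2: "t k * (df (x k) \<bullet> d k) \<le> t k * (- ((norm (d k))^2))"
      using mult_left_mono[OF conjunct1[OF nnstep[OF False]] less_imp_le[OF tpos[rule_format, of k]]] .
    have i3: "(norm (x (Suc k) - x k))\<^sup>2 = (t k)^2 * (norm (d k))^2" using stepn by (simp add: power_mult_distrib)
    have i4: "F k - t k * (1 - L * t k / 2) * (norm (d k))^2 = F k + t k * (- ((norm (d k))^2)) + L / 2 * ((t k)^2 * (norm (d k))^2)"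
      by (simp add: algebra_simps power2_eq_square)
    have ld2: "f (x (Suc k)) \<le> f (x k) + t k * (df (x k) \<bullet> d k) + L / 2 * ((t k)^2 * (norm (d k))^2)"
      using ld by (simp only: i1 i3)
    show ?thesis using ld2 i2 i4 unfolding F_def by linarith
  qed
  have dlow: "norm (d k) \<ge> norm (df (x k)) - r k - 2 * eps k" for k
  proof (cases "norm (g k) \<le> r k + eps k")
    case True
    have "norm (df (x k)) \<le> norm (g k) + norm (g k - df (x k))" using norm_triangle_ineq4[of "g k" "g k - df (x k)"] by simp
    then show ?thesis using True gerr[rule_format, of k] nul[OF True] by simp
  next
    case False
    have "norm (df (x k)) \<le> norm (g k) + norm (g k - df (x k))" using norm_triangle_ineq4[of "g k" "g k - df (x k)"] by simp
    then show ?thesis using nnstep[OF False] gerr[rule_format, of k] rpos[of k] by simp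
  qed
  have dup: "norm (df (x k)) \<le> norm (d k) + r k + 2 * eps k" for k
  proof (cases "norm (g k) \<le> r k + eps k")
    case True
    have "norm (df (x k)) \<le> norm (g k) + norm (g k - df (x k))" using norm_triangle_ineq4[of "g k" "g k - df (x k)"] by simp
    then show ?thesis using True gerr[rule_format, of k] norm_ge_zero[of "d k"] by linarith
  next
    case False
    have "norm (df (x k)) \<le> norm (g k) + norm (g k - df (x k))" using norm_triangle_ineq4[of "g k" "g k - df (x k)"] by simp
    then show ?thesis using nnstep[OF False] gerr[rule_format, of k] rpos[of k] epspos by (simp add: less_imp_le)
  qed
  obtain m where m: "\<forall>k. m \<le> F k" using assms(6) unfolding bdd_below_def F_def by auto
  have tnn: "0 \<le> t k" for k using tpos less_imp_le by blast
  obtain \<beta> K0 where \<beta>: "\<beta> > 0" and K0: "\<forall>k\<ge>K0. \<beta> * t k * (norm (d k))^2 \<le> F k - F (Suc k)"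
  proof -
    have gen: "\<beta> * t k * (norm (d k))^2 \<le> F k - F (Suc k)" if "\<beta> \<le> 1 - L * t k / 2" for \<beta> k
    proof -
      have "\<beta> * (t k * (norm (d k))^2) \<le> (1 - L * t k / 2) * (t k * (norm (d k))^2)"
        using that tnn[of k] by (intro mult_right_mono) auto
      moreover have "t k * (1 - L * t k / 2) * (norm (d k))^2 = (1 - L * t k / 2) * (t k * (norm (d k))^2)"
        by (simp add: mult_ac)
      moreover have "\<beta> * t k * (norm (d k))^2 = \<beta> * (t k * (norm (d k))^2)" by (simp add: mult_ac)
      ultimately show ?thesis using desc[of k] by linarith
    qed
    show ?thesis
    proof (cases "constant_type_steps L t")
      case True
      then obtain \<delta> \<delta>' where dd: "0 < \<delta>" "\<delta> < 2" "0 < \<delta>'" "\<forall>k. \<delta>' \<le> t k \<and> t k \<le> (2 - \<delta>) / L"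
        unfolding constant_type_steps_def by blast
      have "\<delta>/2 \<le> 1 - L * t k / 2" for k
      proof -
        have "t k * L \<le> 2 - \<delta>" using dd(4) L by (simp add: pos_le_divide_eq)
        then show ?thesis by (simp add: mult.commute)
      qed
      then have H: "\<forall>k\<ge>0. \<delta>/2 * t k * (norm (d k))^2 \<le> F k - F (Suc k)" using gen by blast
      show ?thesis by (rule that[OF _ H]) (use dd(1) in simp)
    next
      case False
      then have dim: "diminishing_steps t" using assms(5) by blast
      then have "t \<longlonglongrightarrow> 0" unfolding diminishing_steps_def by blast
      moreover have "1/L > 0" using L by simp
      ultimately obtain K0 where K0: "\<forall>k\<ge>K0. norm (t k - 0) < 1/L" unfolding LIMSEQ_iff by blast
      have "1/2 \<le> 1 - L * t k / 2" if "k \<ge> K0" for k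
      proof -
        have "t k < 1/L" using K0 that tpos by auto
        then have "t k * L < 1" using L by (simp add: pos_less_divide_eq)
        then show ?thesis by (simp add: mult.commute)
      qed
      then have H: "\<forall>k\<ge>K0. 1/2 * t k * (norm (d k))^2 \<le> F k - F (Suc k)" using gen by blast
      show ?thesis by (rule that[OF _ H]) simp
    qed
  qed
  have P2: "\<forall>i M. \<exists>j\<ge>i. M \<le> (\<Sum>k\<in>{i..<j}. t k)"
  proof (cases "constant_type_steps L t")
    case True
    then obtain \<delta>' where dd: "0 < \<delta>'" "\<forall>k. \<delta>' \<le> t k" unfolding constant_type_steps_def by blast
    have lin: "real n * \<delta>' \<le> (\<Sum>k\<in>{i..<i+n}. t k)" for i n
    proof (induction n)
      case 0 then show ?case by simp
    next
      case (Suc n)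
      have "(\<Sum>k\<in>{i..<i + Suc n}. t k) = (\<Sum>k\<in>{i..<i+n}. t k) + t (i + n)"
        using sum.atLeastLessThan_Suc[of i "i+n" t] by simp
      then show ?case using Suc dd(2)[rule_format, of "i+n"] by (simp add: algebra_simps)
    qed
    show ?thesis
    proof (intro allI)
      fix i M
      obtain n where "M < real n * \<delta>'" using ex_less_of_nat_mult[OF dd(1)] by blast
      then show "\<exists>j\<ge>i. M \<le> (\<Sum>k\<in>{i..<j}. t k)" using lin[of n i] by (intro exI[of _ "i+n"]) auto
    qed
  next
    case False
    then have fl: "filterlim (\<lambda>n. \<Sum>k<n. t k) at_top sequentially"
      using assms(5) unfolding diminishing_steps_def by blast
    show ?thesis
    proof (intro allI)
      fix i M
      from fl[unfolded filterlim_at_top, rule_format, of "M + (\<Sum>k<i. t k)"]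
      obtain N where N: "\<forall>n\<ge>N. M + (\<Sum>k<i. t k) \<le> (\<Sum>k<n. t k)" unfolding eventually_sequentially by blast
      define j where "j = max N i"
      have "(\<Sum>k<j. t k) = (\<Sum>k<i. t k) + (\<Sum>k\<in>{i..<j}. t k)"
        using sum.atLeastLessThan_concat[of 0 i j t] by (simp add: j_def lessThan_atLeast0)
      then show "\<exists>j\<ge>i. M \<le> (\<Sum>k\<in>{i..<j}. t k)" using N[rule_format, of j] by (intro exI[of _ j]) (auto simp: j_def)
    qed
  qed
  have Dnn: "0 \<le> \<beta> * t k * (norm (d k))^2" for k
    using \<beta> tnn[of k] by (intro mult_nonneg_nonneg) auto
  have Fdec: "F (Suc k) \<le> F k" if "k \<ge> K0" for k
    using K0[rule_format, OF that] Dnn[of k] by linarith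
  obtain Fl where Fl: "F \<longlonglongrightarrow> Fl"
  proof -
    have "decseq (\<lambda>n. F (n + K0))" unfolding decseq_Suc_iff using Fdec by simp
    then obtain l where "(\<lambda>n. F (n + K0)) \<longlonglongrightarrow> l" using decseq_convergent[of "\<lambda>n. F (n + K0)" m] m by blast
    then show ?thesis using that LIMSEQ_offset by blast
  qed
  have Dz: "(\<lambda>k. F k - F (Suc k)) \<longlonglongrightarrow> 0" using tendsto_diff[OF Fl LIMSEQ_Suc[OF Fl]] by simp
  have Fc: "Cauchy F" using Fl by (rule LIMSEQ_imp_Cauchy)
  have dnorm0: "(\<lambda>k. norm (d k)) \<longlonglongrightarrow> 0" if ct: "constant_type_steps L t"
  proof -
    obtain \<delta>' where dd: "0 < \<delta>'" "\<forall>k. \<delta>' \<le> t k" using ct unfolding constant_type_steps_def by blast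
    have "(\<lambda>k. (norm (d k))^2) \<longlonglongrightarrow> 0"
    proof (rule Lim_null_comparison[where g = "\<lambda>k. (F k - F (Suc k)) / (\<beta> * \<delta>')"])
      show "\<forall>\<^sub>F k in sequentially. norm ((norm (d k))^2) \<le> (F k - F (Suc k)) / (\<beta> * \<delta>')"
        unfolding eventually_sequentially
      proof (intro exI[of _ K0] allI impI)
        fix k assume "K0 \<le> k"
        have "\<beta> * \<delta>' * (norm (d k))^2 \<le> \<beta> * t k * (norm (d k))^2"
          using dd(2) \<beta> by (intro mult_right_mono) auto
        then have "\<beta> * \<delta>' * (norm (d k))^2 \<le> F k - F (Suc k)"
          using K0[rule_format, OF \<open>K0 \<le> k\<close>] by linarith
        then have "(norm (d k))^2 * (\<beta> * \<delta>') \<le> F k - F (Suc k)" by (simp add: mult_ac)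
        then show "norm ((norm (d k))^2) \<le> (F k - F (Suc k)) / (\<beta> * \<delta>')"
          using \<beta> dd(1) by (simp add: pos_le_divide_eq)
      qed
      show "(\<lambda>k. (F k - F (Suc k)) / (\<beta> * \<delta>')) \<longlonglongrightarrow> 0"
        using tendsto_divide[OF Dz tendsto_const[of "\<beta> * \<delta>'"]] \<beta> dd(1) by simp
    qed
    from tendsto_real_sqrt[OF this] show ?thesis by simp
  qed
  have P3: "(\<lambda>k. norm (x (Suc k) - x k)) \<longlonglongrightarrow> 0"
  proof (cases "constant_type_steps L t")
    case True
    then obtain \<delta> where dd: "\<forall>k. t k \<le> (2 - \<delta>) / L" unfolding constant_type_steps_def by blast
    show ?thesis
    proof (rule Lim_null_comparison[where g = "\<lambda>k. (2 - \<delta>) / L * norm (d k)"])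
      show "\<forall>\<^sub>F k in sequentially. norm (norm (x (Suc k) - x k)) \<le> (2 - \<delta>) / L * norm (d k)"
      proof (intro always_eventually allI)
        fix k
        have "t k * norm (d k) \<le> (2 - \<delta>) / L * norm (d k)" using dd by (intro mult_right_mono) auto
        moreover have "norm (norm (x (Suc k) - x k)) = t k * norm (d k)" using stepn[of k] tnn[of k] by simp
        ultimately show "norm (norm (x (Suc k) - x k)) \<le> (2 - \<delta>) / L * norm (d k)" by linarith
      qed
      show "(\<lambda>k. (2 - \<delta>) / L * norm (d k)) \<longlonglongrightarrow> 0"
      proof -
        have "(\<lambda>k. (2 - \<delta>) / L * norm (d k)) \<longlonglongrightarrow> (2 - \<delta>) / L * 0"
          by (rule tendsto_mult[OF tendsto_const dnorm0[OF True]])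
        then show ?thesis by simp
      qed
    qed
  next
    case False
    then have "t \<longlonglongrightarrow> 0" using assms(5) unfolding diminishing_steps_def by blast
    show ?thesis
    proof (rule Lim_null_comparison[where g = "\<lambda>k. t k + (F k - F (Suc k)) / \<beta>"])
      show "\<forall>\<^sub>F k in sequentially. norm (norm (x (Suc k) - x k)) \<le> t k + (F k - F (Suc k)) / \<beta>"
        unfolding eventually_sequentially
      proof (intro exI[of _ K0] allI impI)
        fix k assume "K0 \<le> k"
        have "0 \<le> (norm (d k) - 1)^2" by simp
        then have "2 * norm (d k) \<le> (norm (d k))^2 + 1" unfolding power2_diff by simp
        then have "norm (d k) \<le> 1 + (norm (d k))^2"
          using zero_le_power2[of "norm (d k)"] norm_ge_zero[of "d k"] by linarith
        then have "t k * norm (d k) \<le> t k * (1 + (norm (d k))^2)" using tnn by (rule mult_left_mono)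
        moreover have "\<beta> * t k * (norm (d k))^2 \<le> F k - F (Suc k)"
          using K0[rule_format, OF \<open>K0 \<le> k\<close>] .
        then have "t k * (norm (d k))^2 * \<beta> \<le> F k - F (Suc k)" by (simp add: mult_ac)
        then have "t k * (norm (d k))^2 \<le> (F k - F (Suc k)) / \<beta>" using \<beta> by (simp add: pos_le_divide_eq)
        moreover have "norm (norm (x (Suc k) - x k)) = t k * norm (d k)" using stepn[of k] tnn[of k] by simp
        ultimately show "norm (norm (x (Suc k) - x k)) \<le> t k + (F k - F (Suc k)) / \<beta>"
          by (simp only: distrib_left mult_1_right)
      qed
      show "(\<lambda>k. t k + (F k - F (Suc k)) / \<beta>) \<longlonglongrightarrow> 0"
        using tendsto_add[OF \<open>t \<longlonglongrightarrow> 0\<close> tendsto_divide[OF Dz tendsto_const[of \<beta>]]] \<beta> by simp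
    qed
  qed
  have epsdec: "\<forall>k. eps (Suc k) \<le> eps k"
  proof
    fix k show "eps (Suc k) \<le> eps k"
    proof (cases "norm (g k) \<le> r k + eps k")
      case True
      have "\<theta> * eps k \<le> 1 * eps k" using th epspos by (intro mult_right_mono) (auto simp: less_imp_le)
      then show ?thesis using nul[OF True] by simp
    next
      case False then show ?thesis using nn[OF False] by simp
    qed
  qed
  have rdec: "\<forall>k. r (Suc k) \<le> r k"
  proof
    fix k show "r (Suc k) \<le> r k"
    proof (cases "norm (g k) \<le> r k + eps k")
      case True
      have "\<mu> * r k \<le> 1 * r k" using mu rpos[of k] by (intro mult_right_mono) (auto simp: less_imp_le)
      then show ?thesis using nul[OF True] by simp
    next
      case False then show ?thesis using nn[OF False] by simp
    qed
  qed
  have infnull: "\<forall>N. \<exists>k\<ge>N. norm (g k) \<le> r k + eps k"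
  proof (rule ccontr)
    assume "\<not> ?thesis"
    then obtain N where N: "\<forall>k\<ge>N. \<not> norm (g k) \<le> r k + eps k" by auto
    have rc: "r k = r N" if "N \<le> k" for k
      using that
    proof (induction rule: dec_induct)
      case base then show ?case by simp
    next
      case (step k)
      have "r (Suc k) = r k" using nn[OF N[rule_format, OF step(1)]] by simp
      then show ?case using step(3) by simp
    qed
    have H: "\<forall>k\<ge>max N K0. \<beta> * (r N)^2 * t k \<le> F k - F (Suc k)"
    proof (intro allI impI)
      fix k assume "max N K0 \<le> k"
      then have kk: "k \<ge> N" "k \<ge> K0" by auto
      have nk: "\<not> norm (g k) \<le> r k + eps k" using N kk(1) by simp
      have "norm (d k) = norm (g k) - eps k" using nnstep[OF nk] by simp
      then have "norm (d k) > r N" using nk rc[OF kk(1)] by linarith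
      then have "(r N)^2 \<le> (norm (d k))^2" using rpos[of N] by (intro power_mono) auto
      then have "\<beta> * t k * (r N)^2 \<le> \<beta> * t k * (norm (d k))^2" using \<beta> tnn[of k] by (intro mult_left_mono) auto
      moreover have "\<beta> * t k * (norm (d k))^2 \<le> F k - F (Suc k)" using K0 kk(2) by simp
      moreover have "\<beta> * (r N)^2 * t k = \<beta> * t k * (r N)^2" by (simp add: mult_ac)
      ultimately show "\<beta> * (r N)^2 * t k \<le> F k - F (Suc k)" by linarith
    qed
    have g: "\<beta> * (r N)^2 > 0" using \<beta> rpos[of N] by simp
    show False by (rule no_infinite_descent[OF H g m P2])
  qed
  have eps0: "eps \<longlonglongrightarrow> 0"
  proof (rule dec_to_zero[OF epspos epsdec th])
    show "\<forall>N. \<exists>k\<ge>N. eps (Suc k) = \<theta> * eps k"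
    proof
      fix N
      from infnull obtain k where "k \<ge> N" "norm (g k) \<le> r k + eps k" by blast
      then show "\<exists>k\<ge>N. eps (Suc k) = \<theta> * eps k" using nul by blast
    qed
  qed
  have r0': "r \<longlonglongrightarrow> 0"
  proof (rule dec_to_zero[OF _ rdec mu])
    show "\<forall>k. 0 < r k" using rpos by blast
    show "\<forall>N. \<exists>k\<ge>N. r (Suc k) = \<mu> * r k"
    proof
      fix N
      from infnull obtain k where "k \<ge> N" "norm (g k) \<le> r k + eps k" by blast
      then show "\<exists>k\<ge>N. r (Suc k) = \<mu> * r k" using nul by blast
    qed
  qed
  have statn: "\<forall>a\<in>accumulation_points x. df a = 0"
  proof (intro ballI)
    fix a assume a: "a \<in> accumulation_points x"
    show "df a = 0"
    proof (rule ccontr)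
      assume nz: "df a \<noteq> 0"
      define c where "c = norm (df a)"
      have c: "c > 0" using nz by (simp add: c_def)
      have "isCont df a" using assms(1) unfolding C1_with_gradient_def
        by (simp add: continuous_on_eq_continuous_at)
      moreover have "c/2 > 0" using c by simp
      ultimately obtain \<rho>2 where \<rho>2: "\<rho>2 > 0" "\<forall>y. dist y a < \<rho>2 \<longrightarrow> dist (df y) (df a) < c/2"
        unfolding continuous_at_eps_delta by blast
      define \<rho> where "\<rho> = \<rho>2 / 2"
      have \<rho>: "\<rho> > 0" "2*\<rho> = \<rho>2" using \<rho>2 by (auto simp: \<rho>_def)
      have dfbig: "norm (df y) \<ge> c/2" if "dist y a < 2*\<rho>" for y
      proof -
        have "dist (df y) (df a) < c/2" using \<rho>2 \<rho> that by auto
        moreover have "norm (df a) \<le> norm (df y) + norm (df a - df y)" by (rule norm_triangle_sub)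
        moreover have "norm (df a - df y) = dist (df y) (df a)" by (simp add: dist_norm norm_minus_commute)
        ultimately show ?thesis unfolding c_def by linarith
      qed
      have "(\<lambda>k. r k + 2 * eps k) \<longlonglongrightarrow> 0 + 2 * 0" by (intro tendsto_intros r0' eps0)
      then have "(\<lambda>k. r k + 2 * eps k) \<longlonglongrightarrow> 0" by simp
      moreover have "c/4 > 0" using c by simp
      ultimately obtain N1 where N1: "\<forall>k\<ge>N1. r k + 2 * eps k < c/4" using lim0_ev_less by blast
      define N1' where "N1' = max N1 K0"
      have big: "norm (d k) \<ge> c/4 \<and> \<beta> * (c/4) * (t k * norm (d k)) \<le> F k - F (Suc k)
                  \<and> \<beta> * (c/4)^2 * t k \<le> F k - F (Suc k)"
        if "k \<ge> N1'" "dist (x k) a < 2*\<rho>" for k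
      proof -
        have kN1: "k \<ge> N1" "k \<ge> K0" using that(1) by (auto simp: N1'_def)
        have "r k + 2 * eps k < c/4" using N1 kN1(1) by blast
        then have nd: "norm (d k) \<ge> c/4" using dlow[of k] dfbig[OF that(2)] by linarith
        have D: "\<beta> * t k * (norm (d k))^2 \<le> F k - F (Suc k)" using K0 kN1(2) by blast
        have bt: "0 \<le> \<beta> * (t k * norm (d k))" using \<beta> tnn[of k] by simp
        have A1: "\<beta> * (t k * norm (d k)) * (c/4) \<le> \<beta> * (t k * norm (d k)) * norm (d k)"
          using nd bt by (intro mult_left_mono) auto
        have A2: "\<beta> * (t k * norm (d k)) * norm (d k) = \<beta> * t k * (norm (d k))^2"
          by (simp add: power2_eq_square mult_ac)
        have A3: "\<beta> * (c/4) * (t k * norm (d k)) = \<beta> * (t k * norm (d k)) * (c/4)" by (simp add: mult_ac)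
        have D1: "\<beta> * (c/4) * (t k * norm (d k)) \<le> F k - F (Suc k)" using A1 A2 A3 D by linarith
        have "(c/4)^2 \<le> (norm (d k))^2" using nd c by (intro power_mono) auto
        then have A4: "\<beta> * t k * (c/4)^2 \<le> \<beta> * t k * (norm (d k))^2" using \<beta> tnn[of k] by (intro mult_left_mono) auto
        have A5: "\<beta> * (c/4)^2 * t k = \<beta> * t k * (c/4)^2" by (simp add: mult_ac)
        have D2: "\<beta> * (c/4)^2 * t k \<le> F k - F (Suc k)" using A4 A5 D by linarith
        show ?thesis using nd D1 D2 by blast
      qed
      show False
      proof (cases "\<exists>N. \<forall>k\<ge>N. dist (x k) a < 2*\<rho>")
        case True
        then obtain N where N: "\<forall>k\<ge>N. dist (x k) a < 2*\<rho>" by blast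
        have H: "\<forall>k\<ge>max N N1'. \<beta> * (c/4)^2 * t k \<le> F k - F (Suc k)"
        proof (intro allI impI)
          fix k assume "max N N1' \<le> k"
          then have "k \<ge> N1'" "k \<ge> N" by auto
          then have "k \<ge> N1'" "dist (x k) a < 2*\<rho>" using N by simp_all
          then show "\<beta> * (c/4)^2 * t k \<le> F k - F (Suc k)" using big by simp
        qed
        have g: "\<beta> * (c/4)^2 > 0" using \<beta> c by simp
        show False by (rule no_infinite_descent[OF H g m P2])
      next
        case False
        then have out: "\<forall>N. \<exists>k\<ge>N. \<not> dist (x k) a < 2*\<rho>" by blast
        define \<gamma> where "\<gamma> = \<beta> * (c/4)"
        have \<gamma>: "\<gamma> > 0" using \<beta> c by (simp add: \<gamma>_def)
        then have "\<gamma> * \<rho> > 0" using \<rho> by simp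
        from Fc[unfolded Cauchy_def, rule_format, OF this]
        obtain N2 where N2: "\<forall>i\<ge>N2. \<forall>j\<ge>N2. dist (F i) (F j) < \<gamma> * \<rho>" by blast
        from a[unfolded AP_iff, rule_format, OF \<rho>(1), of "max N2 N1'"]
        obtain n where n: "n \<ge> max N2 N1'" "dist (x n) a < \<rho>" by blast
        have inv: "dist (x (n+i)) a < 2*\<rho> \<and> \<gamma> * norm (x (n+i) - x n) \<le> F n - F (n+i)" for i
        proof (induction i)
          case 0 then show ?case using n \<rho> by simp
        next
          case (Suc i)
          define k where "k = n + i"
          have k: "k \<ge> N1'" using n by (simp add: k_def)
          have IH: "dist (x k) a < 2*\<rho>" "\<gamma> * norm (x k - x n) \<le> F n - F k" using Suc.IH by (auto simp: k_def)
          have st: "\<gamma> * (t k * norm (d k)) \<le> F k - F (Suc k)" using big[OF k IH(1)] by (simp add: \<gamma>_def)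
          have tri: "norm (x (Suc k) - x n) \<le> norm (x k - x n) + norm (x (Suc k) - x k)"
            using norm_triangle_ineq[of "x k - x n" "x (Suc k) - x k"] by simp
          have "\<gamma> * norm (x (Suc k) - x n) \<le> \<gamma> * (norm (x k - x n) + norm (x (Suc k) - x k))"
            using tri \<gamma> by (intro mult_left_mono) auto
          also have "\<dots> = \<gamma> * norm (x k - x n) + \<gamma> * (t k * norm (d k))" by (simp add: stepn distrib_left)
          finally have g2: "\<gamma> * norm (x (Suc k) - x n) \<le> F n - F (Suc k)" using IH(2) st by linarith
          have "Suc k \<ge> N2" "n \<ge> N2" using n by (auto simp: k_def)
          then have "dist (F n) (F (Suc k)) < \<gamma> * \<rho>" using N2 by (meson)
          then have "F n - F (Suc k) < \<gamma> * \<rho>" by (simp add: dist_real_def)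
          then have "\<gamma> * norm (x (Suc k) - x n) < \<gamma> * \<rho>" using g2 by linarith
          then have "norm (x (Suc k) - x n) < \<rho>" using \<gamma> by simp
          moreover have "dist (x (Suc k)) a \<le> dist (x (Suc k)) (x n) + dist (x n) a" by (rule dist_triangle)
          ultimately have "dist (x (Suc k)) a < 2*\<rho>" using n by (simp add: dist_norm)
          then show ?case using g2 by (simp add: k_def)
        qed
        from out[rule_format, of n] obtain k where k: "k \<ge> n" "\<not> dist (x k) a < 2*\<rho>" by blast
        have "dist (x (n + (k - n))) a < 2*\<rho>" using inv[of "k - n"] by blast
        then show False using k by simp
      qed
    qed
  qed
  have part3: "bounded (range x) \<longrightarrow> accumulation_points x \<noteq> {} \<and> compact (accumulation_points x) \<and> connected (accumulation_points x)"
  proof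
    assume bd: "bounded (range x)"
    obtain l s where "strict_mono s" "(x \<circ> s) \<longlonglongrightarrow> l" using bounded_imp_convergent_subsequence[OF bd] by blast
    then have ne: "accumulation_points x \<noteq> {}" unfolding accumulation_points_def by blast
    obtain B where B: "\<forall>n. norm (x n) \<le> B" using bd unfolding bounded_iff by auto
    have "accumulation_points x \<subseteq> cball 0 (B+1)"
    proof
      fix z assume "z \<in> accumulation_points x"
      then obtain n where n: "dist (x n) z < 1" unfolding AP_iff using zero_less_one by blast
      have "norm z \<le> norm (x n) + norm (z - x n)" by (rule norm_triangle_sub)
      moreover have "norm (z - x n) = dist (x n) z" by (simp add: dist_norm norm_minus_commute)
      ultimately show "z \<in> cball 0 (B+1)" using B[rule_format, of n] n by simp
    qed
    then have "bounded (accumulation_points x)" using bounded_cball bounded_subset by blast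
    then have cp: "compact (accumulation_points x)" using AP_closed by (simp add: compact_eq_bounded_closed)
    show "accumulation_points x \<noteq> {} \<and> compact (accumulation_points x) \<and> connected (accumulation_points x)"
      using ne cp AP_connected[OF bd P3 cp] by blast
  qed
  have part4: "\<forall>a \<in> accumulation_points x.
         (\<exists>e>0. \<forall>b \<in> accumulation_points x. dist b a < e \<longrightarrow> b = a) \<longrightarrow> x \<longlonglongrightarrow> a"
    using AP_isolated[OF P3] by blast
  have part5: "constant_type_steps L t \<longrightarrow> (\<lambda>k. df (x k)) \<longlonglongrightarrow> 0"
  proof
    assume ct: "constant_type_steps L t"
    have "(\<lambda>k. norm (d k) + r k + 2 * eps k) \<longlonglongrightarrow> 0 + 0 + 2 * 0"
      by (intro tendsto_intros dnorm0[OF ct] r0' eps0)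
    then have g0: "(\<lambda>k. norm (d k) + r k + 2 * eps k) \<longlonglongrightarrow> 0" by simp
    show "(\<lambda>k. df (x k)) \<longlonglongrightarrow> 0"
      using Lim_null_comparison[OF always_eventually[OF allI[OF dup]] g0] .
  qed
  have part1: "decseq eps \<and> eps \<longlonglongrightarrow> 0 \<and> decseq r \<and> r \<longlonglongrightarrow> 0"
    using epsdec rdec eps0 r0' by (simp add: decseq_Suc_iff)
  show ?thesis using part1 statn part3 part4 part5 by blast
qed
end
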